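(* Let $\Gamma\cup\{A\}\subseteq\mathcal{L}_\infty$ and let $t$ be the translation described in the context. (i) If $\Gamma^t\vdash_{\mathbf{K4}(Q)}A^t$, then $\Gamma\vdash_{\mathbf{K4}_h}A$. (ii) If $\Gamma^t\vdash_{\mathbf{S4}(Q)}A^t$, then $\Gamma\vdash_{\mathbf{S4}_h}A$.
   Context: The language $\mathcal{L}_\infty$ consists of modal formulas built from propositional atoms, $\bot,\top$, the connectives $\neg,\wedge,\vee,\rightarrow$ and unary modalities $\Box_n$ ($n\in\mathbb{N}$), with the restriction that $\Box_n A$ is a formula only if $n$ is strictly greater than the index of every box occurring in $A$. Axiom instances are only those that are $\mathcal{L}_\infty$-formulas. Axiom schemes (for all $n\ge0$): $\mathbf{H}$: $\Box_n A\rightarrow\Box_{n+1}A$; $\mathbf{K}_h$: $\Box_n(A\rightarrow B)\rightarrow(\Box_nA\rightarrow\Box_nB)$; $\mathbf{4}_h$: $\Box_nA\rightarrow\Box_{n+1}\Box_nA$; $\mathbf{T}_h$: $\Box_nA\rightarrow A$. For a set $X$ of schemes, $L(X)$ is the least set of $\mathcal{L}_\infty$-formulas containing all classical propositional tautologies and all instances of the schemes in $X$, closed under modus ponens and the rule: from $A$ infer $\Box_nA$ for any $n$ greater than all box indices in $A$. $\mathbf{K4}_h=L(\mathbf{H},\mathbf{K}_h,\mathbf{4}_h)$, $\mathbf{S4}_h=L(\mathbf{H},\mathbf{K}_h,\mathbf{4}_h,\mathbf{T}_h)$. For a set $\Gamma$, $\Gamma\vdash_LA$ means $\bigwedge\Delta\rightarrow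 A\in L$ for some finite $\Delta\subseteq\Gamma$ (analogously for the ordinary logics below). Let $Q=\{q_n\}_{n\ge0}$ be new propositional atoms not occurring in $\mathcal{L}_\infty$-formulas, and let $\mathcal{L}_\Box(Q)$ be the ordinary unimodal language (single modality $\Box$) over the atoms together with $Q$; $\mathbf{K4}(Q)$ and $\mathbf{S4}(Q)$ are the usual modal logics $\mathbf{K4}$ and $\mathbf{S4}$ in this language. The translation $t:\mathcal{L}_\infty\to\mathcal{L}_\Box(Q)$: $p^t=p$ for atoms, $t$ commutes with $\neg,\wedge,\vee,\rightarrow$, and $(\Box_nA)^t=\Box(\bigwedge_{i=0}^n q_i\rightarrow A^t)$. $\Gamma^t=\{B^t:B\in\Gamma\}$. *)

theory Defs
  imports Main
begin

datatype 'a fm =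
    Atom 'a | Bot | Top | Neg "'a fm" | Conj "'a fm" "'a fm" | Disj "'a fm" "'a fm"
  | Imp "'a fm" "'a fm" | Box nat "'a fm"

primrec boxes :: "'a fm \<Rightarrow> nat set" where
  "boxes (Atom p) = {}"
| "boxes Bot = {}"
| "boxes Top = {}"
| "boxes (Neg A) = boxes A"
| "boxes (Conj A B) = boxes A \<union> boxes B"
| "boxes (Disj A B) = boxes A \<union> boxes B"
| "boxes (Imp A B) = boxes A \<union> boxes B"
| "boxes (Box n A) = insert n (boxes A)"

primrec wf :: "'a fm \<Rightarrow> bool" where
  "wf (Atom p) = True"
| "wf Bot = True"
| "wf Top = True"
| "wf (Neg A) = wf A"
| "wf (Conj A B) = (wf A \<and> wf B)"
| "wf (Disj A B) = (wf A \<and> wf B)"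
| "wf (Imp A B) = (wf A \<and> wf B)"
| "wf (Box n A) = (wf A \<and> (\<forall>m\<in>boxes A. m < n))"

primrec peval :: "('a \<Rightarrow> bool) \<Rightarrow> (nat \<Rightarrow> 'a fm \<Rightarrow> bool) \<Rightarrow> 'a fm \<Rightarrow> bool" where
  "peval V W (Atom p) = V p"
| "peval V W Bot = False"
| "peval V W Top = True"
| "peval V W (Neg A) = (\<not> peval V W A)"
| "peval V W (Conj A B) = (peval V W A \<and> peval V W B)"
| "peval V W (Disj A B) = (peval V W A \<or> peval V W B)"
| "peval V W (Imp A B) = (peval V W A \<longrightarrow> peval V W B)"
| "peval V W (Box n A) = W n A"

definition ptaut :: "'a fm \<Rightarrow> bool" where
  "ptaut A \<longleftrightarrow> (\<forall>V W. peval V W A)"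

inductive Lh :: "bool \<Rightarrow> 'a fm \<Rightarrow> bool" for withT :: bool where
  taut: "wf A \<Longrightarrow> ptaut A \<Longrightarrow> Lh withT A"
| axH: "wf (Imp (Box n A) (Box (Suc n) A)) \<Longrightarrow> Lh withT (Imp (Box n A) (Box (Suc n) A))"
| axK: "wf (Imp (Box n (Imp A B)) (Imp (Box n A) (Box n B))) \<Longrightarrow>
          Lh withT (Imp (Box n (Imp A B)) (Imp (Box n A) (Box n B)))"
| ax4: "wf (Imp (Box n A) (Box (Suc n) (Box n A))) \<Longrightarrow>
          Lh withT (Imp (Box n A) (Box (Suc n) (Box n A)))"
| axT: "withT \<Longrightarrow> wf (Imp (Box n A) A) \<Longrightarrow> Lh withT (Imp (Box n A) A)"
| mp: "Lh withT A \<Longrightarrow> Lh withT (Imp A B) \<Longrightarrow> Lh withT B"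
| nec: "Lh withT A \<Longrightarrow> (\<forall>m\<in>boxes A. m < n) \<Longrightarrow> Lh withT (Box n A)"

abbreviation K4h :: "'a fm \<Rightarrow> bool" where "K4h \<equiv> Lh False"
abbreviation S4h :: "'a fm \<Rightarrow> bool" where "S4h \<equiv> Lh True"

definition bigConj :: "'a fm list \<Rightarrow> 'a fm" where
  "bigConj ds = foldr Conj ds Top"

definition Lh_derives :: "bool \<Rightarrow> 'a fm set \<Rightarrow> 'a fm \<Rightarrow> bool" where
  "Lh_derives withT \<Gamma> A \<longleftrightarrow> (\<exists>ds. set ds \<subseteq> \<Gamma> \<and> Lh withT (Imp (bigConj ds) A))"

datatype 'b mfm =
    MAtom 'b | MBot | MTop | MNeg "'b mfm" | MConj "'b mfm" "'b mfm" | MDisj "'b mfm" "'b mfm"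
  | MImp "'b mfm" "'b mfm" | MBox "'b mfm"

primrec meval :: "('b \<Rightarrow> bool) \<Rightarrow> ('b mfm \<Rightarrow> bool) \<Rightarrow> 'b mfm \<Rightarrow> bool" where
  "meval V W (MAtom p) = V p"
| "meval V W MBot = False"
| "meval V W MTop = True"
| "meval V W (MNeg A) = (\<not> meval V W A)"
| "meval V W (MConj A B) = (meval V W A \<and> meval V W B)"
| "meval V W (MDisj A B) = (meval V W A \<or> meval V W B)"
| "meval V W (MImp A B) = (meval V W A \<longrightarrow> meval V W B)"
| "meval V W (MBox A) = W A"

definition mtaut :: "'b mfm \<Rightarrow> bool" where
  "mtaut A \<longleftrightarrow> (\<forall>V W. meval V W A)"

text \<open>Ordinary K4 (withT = False) and S4 (withT = True).\<close>
inductive Lm :: "bool \<Rightarrow> 'b mfm \<Rightarrow> bool" for withT :: bool where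
  taut: "mtaut A \<Longrightarrow> Lm withT A"
| axK: "Lm withT (MImp (MBox (MImp A B)) (MImp (MBox A) (MBox B)))"
| ax4: "Lm withT (MImp (MBox A) (MBox (MBox A)))"
| axT: "withT \<Longrightarrow> Lm withT (MImp (MBox A) A)"
| mp: "Lm withT A \<Longrightarrow> Lm withT (MImp A B) \<Longrightarrow> Lm withT B"
| nec: "Lm withT A \<Longrightarrow> Lm withT (MBox A)"

definition mBigConj :: "'b mfm list \<Rightarrow> 'b mfm" where
  "mBigConj ds = foldr MConj ds MTop"

definition Lm_derives :: "bool \<Rightarrow> 'b mfm set \<Rightarrow> 'b mfm \<Rightarrow> bool" where
  "Lm_derives withT \<Gamma> A \<longleftrightarrow> (\<exists>ds. set ds \<subseteq> \<Gamma> \<and> Lm withT (MImp (mBigConj ds) A))"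

section \<open>The translation t into L_Box(Q); the new atoms q_n are Inr n\<close>

primrec qconj :: "nat \<Rightarrow> ('a + nat) mfm" where
  "qconj 0 = MAtom (Inr 0)"
| "qconj (Suc n) = MConj (qconj n) (MAtom (Inr (Suc n)))"

primrec tr :: "'a fm \<Rightarrow> ('a + nat) mfm" where
  "tr (Atom p) = MAtom (Inl p)"
| "tr Bot = MBot"
| "tr Top = MTop"
| "tr (Neg A) = MNeg (tr A)"
| "tr (Conj A B) = MConj (tr A) (tr B)"
| "tr (Disj A B) = MDisj (tr A) (tr B)"
| "tr (Imp A B) = MImp (tr A) (tr B)"
| "tr (Box n A) = MBox (MImp (qconj n) (tr A))"

end

theory Submission
  imports Defs
begin

definition BX :: "(nat \<Rightarrow> 'a fm) \<Rightarrow> nat \<Rightarrow> 'a fm" where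
  "BX f k = bigConj (map (\<lambda>m. Box m (f m)) [0..<k])"

primrec sfm :: "bool \<Rightarrow> ('a + nat) mfm \<Rightarrow> nat \<Rightarrow> 'a fm" where
  "sfm T (MAtom p) = (\<lambda>k. case p of Inl a \<Rightarrow> Atom a | Inr i \<Rightarrow> if i \<le> k then Top else Bot)"
| "sfm T MBot = (\<lambda>k. Bot)"
| "sfm T MTop = (\<lambda>k. Top)"
| "sfm T (MNeg A) = (\<lambda>k. Neg (sfm T A k))"
| "sfm T (MConj A B) = (\<lambda>k. Conj (sfm T A k) (sfm T B k))"
| "sfm T (MDisj A B) = (\<lambda>k. Disj (sfm T A k) (sfm T B k))"
| "sfm T (MImp A B) = (\<lambda>k. Imp (sfm T A k) (sfm T B k))"
| "sfm T (MBox A) = (\<lambda>k. if T then Conj (sfm T A k) (BX (sfm T A) k) else BX (sfm T A) k)"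

lemma wf_Lh: "Lh T A \<Longrightarrow> wf A"
  by (induction rule: Lh.induct) auto

lemma bigConj_simps[simp]: "bigConj [] = Top" "bigConj (a # xs) = Conj a (bigConj xs)"
  by (auto simp: bigConj_def)

lemma peval_bigConj[simp]: "peval V W (bigConj xs) = (\<forall>x\<in>set xs. peval V W x)"
  by (induct xs) (auto simp: bigConj_def)
lemma boxes_bigConj[simp]: "boxes (bigConj xs) = (\<Union>x\<in>set xs. boxes x)"
  by (induct xs) (auto simp: bigConj_def)
lemma wf_bigConj[simp]: "wf (bigConj xs) = (\<forall>x\<in>set xs. wf x)"
  by (induct xs) (auto simp: bigConj_def)

lemma Lh_bigConj: "\<forall>x\<in>set xs. Lh T x \<Longrightarrow> Lh T (bigConj xs)"
proof (induct xs)
  case Nil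
  then show ?case by (auto simp: bigConj_def ptaut_def intro: Lh.taut)
next
  case (Cons a xs)
  then have a: "Lh T a" and b: "Lh T (bigConj xs)" by auto
  have "Lh T (Imp a (Imp (bigConj xs) (Conj a (bigConj xs))))"
    by (rule Lh.taut) (use wf_Lh[OF a] wf_Lh[OF b] in \<open>auto simp: ptaut_def\<close>)
  then show ?case using a b by (auto simp: bigConj_def intro: Lh.mp)
qed

lemma propS:
  assumes "finite F" "\<forall>x\<in>F. Lh T x" "wf C"
    "\<And>V W. (\<forall>x\<in>F. peval V W x) \<Longrightarrow> peval V W C"
  shows "Lh T C"
proof -
  obtain xs where xs: "set xs = F" using finite_list[OF assms(1)] by blast
  have 1: "Lh T (bigConj xs)" using Lh_bigConj assms(2) xs by blast
  have "Lh T (Imp (bigConj xs) C)"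
    by (rule Lh.taut) (use wf_Lh[OF 1] assms(3,4) xs in \<open>auto simp: ptaut_def\<close>)
  then show ?thesis using 1 by (rule Lh.mp[rotated])
qed

lemma box_mono: "Lh T (Imp A B) \<Longrightarrow> \<forall>m\<in>boxes A \<union> boxes B. m < n \<Longrightarrow> Lh T (Imp (Box n A) (Box n B))"
proof -
  assume a: "Lh T (Imp A B)" and b: "\<forall>m\<in>boxes A \<union> boxes B. m < n"
  have 1: "Lh T (Box n (Imp A B))" using a b by (auto intro: Lh.nec)
  have "Lh T (Imp (Box n (Imp A B)) (Imp (Box n A) (Box n B)))"
    by (rule Lh.axK) (use wf_Lh[OF a] b in auto)
  then have "Lh T (Imp (Box n A) (Box n B))" using 1 by (rule Lh.mp[rotated])
  then show ?thesis .
qed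

lemma box_conj:
  assumes "wf A" "wf B" "\<forall>m\<in>boxes A \<union> boxes B. m < n"
  shows "Lh T (Imp (Conj (Box n A) (Box n B)) (Box n (Conj A B)))"
proof -
  have t: "Lh T (Imp A (Imp B (Conj A B)))"
    by (rule Lh.taut) (use assms in \<open>auto simp: ptaut_def\<close>)
  have 1: "Lh T (Imp (Box n A) (Box n (Imp B (Conj A B))))"
    by (rule box_mono[OF t]) (use assms in auto)
  have 2: "Lh T (Imp (Box n (Imp B (Conj A B))) (Imp (Box n B) (Box n (Conj A B))))"
    by (rule Lh.axK) (use assms in auto)
  show ?thesis
    by (rule propS[of "{Imp (Box n A) (Box n (Imp B (Conj A B))),
        Imp (Box n (Imp B (Conj A B))) (Imp (Box n B) (Box n (Conj A B)))}"])
      (use 1 2 assms in auto)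
qed

lemma box_bigConj:
  "\<forall>x\<in>set xs. wf x \<and> (\<forall>m\<in>boxes x. m < n) \<Longrightarrow>
   Lh T (Imp (bigConj (map (Box n) xs)) (Box n (bigConj xs)))"
proof (induct xs)
  case Nil
  have "Lh T (Top::'a fm)" by (rule Lh.taut) (auto simp: ptaut_def)
  then have "Lh T (Box n (Top::'a fm))" by (auto intro: Lh.nec)
  then show ?case
    by (intro propS[of "{Box n Top}"]) auto
next
  case (Cons a xs)
  then have IH: "Lh T (Imp (bigConj (map (Box n) xs)) (Box n (bigConj xs)))" by auto
  have c: "Lh T (Imp (Conj (Box n a) (Box n (bigConj xs))) (Box n (Conj a (bigConj xs))))"
    by (rule box_conj) (use Cons.prems in auto)
  show ?case
    by (rule propS[of "{Imp (bigConj (map (Box n) xs)) (Box n (bigConj xs)),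
        Imp (Conj (Box n a) (Box n (bigConj xs))) (Box n (Conj a (bigConj xs)))}"])
      (use IH c Cons.prems in auto)
qed

lemma H_iter: "wf (Box n A) \<Longrightarrow> Lh T (Imp (Box n A) (Box (n + d) A))"
proof (induct d)
  case 0
  then show ?case by (intro Lh.taut) (auto simp: ptaut_def)
next
  case (Suc d)
  have h: "Lh T (Imp (Box (n + d) A) (Box (Suc (n + d)) A))"
    by (rule Lh.axH) (use Suc.prems in auto)
  show ?case
    by (rule propS[of "{Imp (Box n A) (Box (n + d) A), Imp (Box (n + d) A) (Box (Suc (n + d)) A)}"])
      (use Suc h in auto)
qed

lemma H_iter': "wf (Box n A) \<Longrightarrow> n \<le> m \<Longrightarrow> Lh T (Imp (Box n A) (Box m A))"
  using H_iter[of n A T "m - n"] by simp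

lemma four_iter: "wf (Box l X) \<Longrightarrow> l < m \<Longrightarrow> Lh T (Imp (Box l X) (Box m (Box l X)))"
proof -
  assume a: "wf (Box l X)" "l < m"
  have 1: "Lh T (Imp (Box l X) (Box (Suc l) (Box l X)))" by (rule Lh.ax4) (use a in auto)
  have 2: "Lh T (Imp (Box (Suc l) (Box l X)) (Box m (Box l X)))"
    by (rule H_iter') (use a in auto)
  show ?thesis
    by (rule propS[of "{Imp (Box l X) (Box (Suc l) (Box l X)), Imp (Box (Suc l) (Box l X)) (Box m (Box l X))}"])
      (use 1 2 a in auto)
qed

lemma peval_BX[simp]: "peval V W (BX f k) = (\<forall>m<k. W m (f m))"
  by (auto simp: BX_def)

lemma sfm_wf: "wf (sfm T \<phi> k) \<and> (\<forall>b\<in>boxes (sfm T \<phi> k). b < k)"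
proof (induct \<phi> arbitrary: k)
  case (MAtom x)
  then show ?case by (cases x) auto
next
  case (MBox \<phi>)
  have "wf (BX (sfm T \<phi>) k) \<and> (\<forall>b\<in>boxes (BX (sfm T \<phi>) k). b < k)"
    using MBox by (auto simp: BX_def) (meson less_trans)
  then show ?case using MBox by auto
qed auto

lemma sfm_peval: "peval V W (sfm T \<phi> k) =
  meval (\<lambda>p. peval V W (sfm T (MAtom p) k)) (\<lambda>\<psi>. peval V W (sfm T (MBox \<psi>) k)) \<phi>"
  by (induct \<phi>) auto


lemma sound: "Lm T \<phi> \<Longrightarrow> Lh T (sfm T \<phi> k)"
proof (induction arbitrary: k rule: Lm.induct)
  case (taut A)
  show ?case
  proof (rule Lh.taut)
    show "wf (sfm T A k)" using sfm_wf by blast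
    show "ptaut (sfm T A k)" using taut unfolding ptaut_def mtaut_def
      by (subst sfm_peval) blast
  qed
next
  case (axK A B)
  let ?F = "(\<lambda>m. Imp (Box m (Imp (sfm T A m) (sfm T B m))) (Imp (Box m (sfm T A m)) (Box m (sfm T B m)))) ` {..<k}"
  have "\<forall>x\<in>?F. Lh T x"
  proof
    fix x assume "x \<in> ?F"
    then obtain m where "m < k" "x = Imp (Box m (Imp (sfm T A m) (sfm T B m))) (Imp (Box m (sfm T A m)) (Box m (sfm T B m)))" by auto
    then show "Lh T x" using sfm_wf[of T A m] sfm_wf[of T B m] by (auto intro!: Lh.axK)
  qed
  then show ?case
    by (intro propS[of ?F]) (use sfm_wf[of T A] sfm_wf[of T B] in \<open>auto simp: BX_def\<close>)
next
  case (ax4 A)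
  define f where "f = sfm T A"
  define BB where "BB = (\<lambda>m. if T then Conj (f m) (BX f m) else BX f m)"
  have fw: "wf (f m) \<and> (\<forall>b\<in>boxes (f m). b < m)" for m using sfm_wf f_def by blast
  have BBw: "wf (BB m) \<and> (\<forall>b\<in>boxes (BB m). b < m)" for m
  proof -
    have "sfm T (MBox A) m = BB m" by (simp add: BB_def f_def)
    then show ?thesis using sfm_wf[of T "MBox A" m] by simp
  qed
  have G: "Lh T (Imp (BX f k) (Box m (BB m)))" if mk: "m < k" for m
  proof -
    have F2: "Lh T (Imp (Box l (f l)) (Box m (Box l (f l))))" if "l < m" for l
      by (rule four_iter) (use fw that in auto)
    have F1: "Lh T (Imp (bigConj (map (Box m) (map (\<lambda>l. Box l (f l)) [0..<m]))) (Box m (BX f m)))"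
      unfolding BX_def by (rule box_bigConj) (use fw in \<open>fastforce dest: less_trans\<close>)
    have F3: "Lh T (Imp (Conj (Box m (f m)) (Box m (BX f m))) (Box m (Conj (f m) (BX f m))))"
      by (rule box_conj) (use fw BBw[of m] in \<open>auto simp: BB_def split: if_splits\<close>)
    let ?F = "{Imp (bigConj (map (Box m) (map (\<lambda>l. Box l (f l)) [0..<m]))) (Box m (BX f m)),
       Imp (Conj (Box m (f m)) (Box m (BX f m))) (Box m (Conj (f m) (BX f m)))}
       \<union> (\<lambda>l. Imp (Box l (f l)) (Box m (Box l (f l)))) ` {..<m}"
    show ?thesis
    proof (rule propS[of ?F])
      show "finite ?F" by auto
      show "\<forall>x\<in>?F. Lh T x" using F1 F2 F3 by auto
      show "wf (Imp (BX f k) (Box m (BB m)))"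
        using BBw[of m] BBw[of k] by (auto simp: f_def BB_def split: if_splits)
      fix V W assume H: "\<forall>x\<in>?F. peval V W x"
      show "peval V W (Imp (BX f k) (Box m (BB m)))"
      proof (simp only: peval.simps, intro impI)
        assume b: "peval V W (BX f k)"
        then have "\<forall>l<m. W m (Box l (f l))" using H mk by auto
        then have "W m (BX f m)" using H by auto
        moreover have "W m (f m)" using b mk by auto
        ultimately show "W m (BB m)" using H by (auto simp: BB_def)
      qed
    qed
  qed
  let ?F = "(\<lambda>m. Imp (BX f k) (Box m (BB m))) ` {..<k}"
  show ?case
  proof (rule propS[of ?F])
    show "finite ?F" by auto
    show "\<forall>x\<in>?F. Lh T x" using G by auto
    show "wf (sfm T (MImp (MBox A) (MBox (MBox A))) k)" using sfm_wf by blast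
    fix V W assume H: "\<forall>x\<in>?F. peval V W x"
    have e: "sfm T (MImp (MBox A) (MBox (MBox A))) k = Imp (BB k) (if T then Conj (BB k) (BX BB k) else BX BB k)"
      by (simp add: BB_def f_def)
    show "peval V W (sfm T (MImp (MBox A) (MBox (MBox A))) k)"
      unfolding e using H by (auto simp: BB_def)
  qed
next
  case (axT A)
  then show ?case
    by (intro Lh.taut) (use sfm_wf[of T "MImp (MBox A) A" k] in \<open>auto simp: ptaut_def\<close>)
next
  case (mp A B)
  then show ?case by (auto intro: Lh.mp)
next
  case (nec A)
  let ?F = "insert (sfm T A k) ((\<lambda>m. Box m (sfm T A m)) ` {..<k})"
  have "\<forall>x\<in>?F. Lh T x" using nec sfm_wf[of T A] by (auto intro: Lh.nec)
  then show ?case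
    by (intro propS[of ?F]) (use sfm_wf[of T "MBox A" k] in auto)
qed


lemma qconj_peval[simp]: "peval V W (sfm T (qconj n) m) = (n \<le> m)"
  by (induct n) auto

lemma qconj_boxes[simp]: "boxes (sfm T (qconj n) m) = {}" and qconj_wf[simp]: "wf (sfm T (qconj n) m)"
  by (induct n) auto

lemma equiv: "wf C \<Longrightarrow> \<forall>b\<in>boxes C. b < k \<Longrightarrow>
   Lh T (Imp (sfm T (tr C) k) C) \<and> Lh T (Imp C (sfm T (tr C) k))"
proof (induct C arbitrary: k)
  case (Atom x)
  then show ?case by (auto intro!: Lh.taut simp: ptaut_def)
next
  case Bot
  then show ?case by (auto intro!: Lh.taut simp: ptaut_def)
next
  case Top
  then show ?case by (auto intro!: Lh.taut simp: ptaut_def)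
next
  case (Neg A)
  then have I: "Lh T (Imp (sfm T (tr A) k) A)" "Lh T (Imp A (sfm T (tr A) k))" by auto
  show ?case
    by (intro conjI propS[of "{Imp (sfm T (tr A) k) A, Imp A (sfm T (tr A) k)}"])
      (use I Neg.prems sfm_wf[of T "tr A" k] in auto)
next
  case (Conj A B)
  then have I: "Lh T (Imp (sfm T (tr A) k) A)" "Lh T (Imp A (sfm T (tr A) k))"
     "Lh T (Imp (sfm T (tr B) k) B)" "Lh T (Imp B (sfm T (tr B) k))" by auto
  show ?case
    by (intro conjI propS[of "{Imp (sfm T (tr A) k) A, Imp A (sfm T (tr A) k),
         Imp (sfm T (tr B) k) B, Imp B (sfm T (tr B) k)}"])
      (use I Conj.prems sfm_wf[of T "tr A" k] sfm_wf[of T "tr B" k] in auto)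
next
  case (Disj A B)
  then have I: "Lh T (Imp (sfm T (tr A) k) A)" "Lh T (Imp A (sfm T (tr A) k))"
     "Lh T (Imp (sfm T (tr B) k) B)" "Lh T (Imp B (sfm T (tr B) k))" by auto
  show ?case
    by (intro conjI propS[of "{Imp (sfm T (tr A) k) A, Imp A (sfm T (tr A) k),
         Imp (sfm T (tr B) k) B, Imp B (sfm T (tr B) k)}"])
      (use I Disj.prems sfm_wf[of T "tr A" k] sfm_wf[of T "tr B" k] in auto)
next
  case (Imp A B)
  then have I: "Lh T (Imp (sfm T (tr A) k) A)" "Lh T (Imp A (sfm T (tr A) k))"
     "Lh T (Imp (sfm T (tr B) k) B)" "Lh T (Imp B (sfm T (tr B) k))" by auto
  show ?case
    by (intro conjI propS[of "{Imp (sfm T (tr A) k) A, Imp A (sfm T (tr A) k),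
         Imp (sfm T (tr B) k) B, Imp B (sfm T (tr B) k)}"])
      (use I Imp.prems sfm_wf[of T "tr A" k] sfm_wf[of T "tr B" k] in auto)
next
  case (Box n A)
  have wA: "wf A" and bA: "\<forall>b\<in>boxes A. b < n" and nk: "n < k" using Box.prems by auto
  define g where "g = sfm T (tr A)"
  define h where "h = (\<lambda>m. Imp (sfm T (qconj n) m) (g m))"
  have gw: "wf (g m) \<and> (\<forall>b\<in>boxes (g m). b < m)" for m using sfm_wf g_def by blast
  have hw: "wf (h m) \<and> (\<forall>b\<in>boxes (h m). b < m)" for m using gw[of m] by (simp add: h_def)
  have IH: "Lh T (Imp (g m) A) \<and> Lh T (Imp A (g m))" if "n \<le> m" for m
  proof -
    have "\<forall>b\<in>boxes A. b < m" using bA that by fastforce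
    then show ?thesis using Box.hyps[OF wA, of m] g_def by auto
  qed
  have e: "sfm T (tr (Box n A)) k = (if T then Conj (h k) (BX h k) else BX h k)"
    by (simp add: h_def g_def)
  have wBk: "wf (BX h k)" using hw by (fastforce simp: BX_def dest: less_trans)
  have wB: "wf (Box n A)" using Box.prems by simp
  have hn: "Lh T (Imp (h n) A)"
    by (rule propS[of "{Imp (g n) A}"]) (use IH[of n] hw[of n] wA in \<open>auto simp: h_def\<close>)
  have d1: "Lh T (Imp (Box n (h n)) (Box n A))"
    by (rule box_mono[OF hn]) (use hw[of n] bA in auto)
  have D1: "Lh T (Imp (sfm T (tr (Box n A)) k) (Box n A))"
    unfolding e
    by (rule propS[of "{Imp (Box n (h n)) (Box n A)}"]) (use d1 wB wBk hw[of k] nk in auto)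
  have Dm: "Lh T (Imp (Box n A) (Box m (h m)))" if "m < k" for m
  proof (cases "m < n")
    case True
    have "Lh T (h m)" by (rule Lh.taut) (use hw[of m] True in \<open>auto simp: ptaut_def h_def\<close>)
    then have "Lh T (Box m (h m))" using hw[of m] by (auto intro: Lh.nec)
    then show ?thesis
      by (intro propS[of "{Box m (h m)}"]) (use wB hw[of m] in auto)
  next
    case False
    have 1: "Lh T (Imp (Box n A) (Box m A))" by (rule H_iter') (use wB False in auto)
    have 2: "Lh T (Imp A (h m))"
      by (rule propS[of "{Imp A (g m)}"]) (use IH[of m] False hw[of m] wA in \<open>auto simp: h_def\<close>)
    have 3: "Lh T (Imp (Box m A) (Box m (h m)))"
      by (rule box_mono[OF 2]) (use hw[of m] bA False in auto)
    show ?thesis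
      by (rule propS[of "{Imp (Box n A) (Box m A), Imp (Box m A) (Box m (h m))}"])
        (use 1 3 wB hw[of m] False bA in auto)
  qed
  have DT: "Lh T (Imp (Box n A) (h k))" if T
  proof -
    have 1: "Lh T (Imp (Box n A) A)" by (rule Lh.axT) (use that wB in auto)
    show ?thesis
      by (rule propS[of "{Imp (Box n A) A, Imp A (g k)}"])
        (use 1 IH[of k] nk wB hw[of k] in \<open>auto simp: h_def\<close>)
  qed
  let ?F = "(\<lambda>m. Imp (Box n A) (Box m (h m))) ` {..<k} \<union> (if T then {Imp (Box n A) (h k)} else {})"
  have D2: "Lh T (Imp (Box n A) (sfm T (tr (Box n A)) k))"
    unfolding e
  proof (rule propS[of ?F])
    show "finite ?F" by auto
    show "\<forall>x\<in>?F. Lh T x" using Dm DT by auto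
    show "wf (Imp (Box n A) (if T then Conj (h k) (BX h k) else BX h k))"
      using wB wBk hw[of k] by auto
    fix V W assume H: "\<forall>x\<in>?F. peval V W x"
    show "peval V W (Imp (Box n A) (if T then Conj (h k) (BX h k) else BX h k))"
      using H by auto
  qed
  show ?case using D1 D2 by blast
qed

lemma list_preimage: "set ds \<subseteq> f ` S \<Longrightarrow> \<exists>es. set es \<subseteq> S \<and> ds = map f es"
proof (induct ds)
  case Nil then show ?case by auto
next
  case (Cons d ds)
  then obtain es where "set es \<subseteq> S" "ds = map f es" by auto
  moreover obtain e where "e \<in> S" "d = f e" using Cons.prems by auto
  ultimately show ?case by (intro exI[of _ "e # es"]) auto
qed

lemma mBigConj_tr: "mBigConj (map tr es) = tr (bigConj es)"
  by (induct es) (auto simp: mBigConj_def bigConj_def)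

lemma finite_boxes: "finite (boxes C)"
  by (induct C) auto

lemma main:
  assumes "\<forall>B\<in>\<Gamma>. wf B" "wf A" "Lm_derives T (tr ` \<Gamma>) (tr A)"
  shows "Lh_derives T \<Gamma> A"
proof -
  obtain ds where ds: "set ds \<subseteq> tr ` \<Gamma>" "Lm T (MImp (mBigConj ds) (tr A))"
    using assms(3) unfolding Lm_derives_def by blast
  obtain es where es: "set es \<subseteq> \<Gamma>" "ds = map tr es" using list_preimage[OF ds(1)] by blast
  define C where "C = Imp (bigConj es) A"
  have L: "Lm T (tr C)" using ds(2) es(2) by (simp add: C_def mBigConj_tr)
  have wC: "wf C" using assms(1,2) es(1) by (auto simp: C_def)
  define k where "k = Suc (Max (boxes C))"
  have bk: "\<forall>b\<in>boxes C. b < k" using finite_boxes[of C] by (auto simp: k_def less_Suc_eq_le)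
  have "Lh T (sfm T (tr C) k)" using sound[OF L] .
  moreover have "Lh T (Imp (sfm T (tr C) k) C)" using equiv[OF wC bk] by blast
  ultimately have "Lh T C" by (rule Lh.mp)
  then show ?thesis unfolding Lh_derives_def C_def using es(1) by blast
qed

theorem theorem3p11:
  fixes \<Gamma> :: "'a fm set" and A :: "'a fm"
  assumes "\<forall>B\<in>\<Gamma>. wf B" and "wf A"
  shows "(Lm_derives False (tr ` \<Gamma>) (tr A) \<longrightarrow> Lh_derives False \<Gamma> A)
       \<and> (Lm_derives True (tr ` \<Gamma>) (tr A) \<longrightarrow> Lh_derives True \<Gamma> A)"
  using main[OF assms] by blast

end
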